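(* Let $A \in \mathbb{R}^{m \times n}$ be the payoff matrix of a finite two-player zero-sum game with value $v^*$, and let $\{(x_t,y_t)\}_{t\in\mathbb{N}}$ together with $\{(\overline{x}_t,\overline{y}_t)\}_{t \in \mathbb{N}}$ be an anticipatory fictitious play (AFP) process for $A$ (defined in the context), with arbitrary choices among best responses when there are ties. Then $$\lim_{t\to\infty} \min \overline{x}_t^{\mathsf T} A = \lim_{t\to\infty} \max A\overline{y}_t = v^*,$$ i.e. the average strategies converge to a Nash equilibrium, and moreover $$\max A\overline{y}_t - \min \overline{x}_t^{\mathsf T} A = O\big(t^{-1/(m+n-2)}\big) \quad \text{for all } t \in \mathbb{N},$$ the same rate bound that holds for fictitious play.
   Context: A two-player zero-sum game is given by $A\in\mathbb{R}^{m\times n}$: if player 1 plays row $i$ and player 2 plays column $j$, payoffs are $(A_{i,j},-A_{i,j})$. $\Delta^k$ denotes the probability simplex in $\mathbb{R}^k$; strategies are $x\in\Delta^m$, $y\in\Delta^n$. For a vector $w$, $\max w$ and $\min w$ denote its largest and smallest entries. The value is $v^* = \max_{x\in\Delta^m}\min_{y\in\Delta^n} x^{\mathsf T}Ay$. $e_1,e_2,\dots$ denote standard basis vectors. Best response operators: $\texttt{BR}^1_A(y)=\{e_i\in\mathbb{R}^m : i\in\arg\max Ay\}$ and $\texttt{BR}^2_A(x)=\{e_j\in\mathbb{R}^n: j \in \arg\min x^{\mathsf T}A\}$. The AFP process: for some $i,j$, $x_1=\overline{x}_1=e_i$, $y_1=\overline{y}_1=e_j$, and for each $t\in\mathbb{N}$: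 $x'_{t+1}\in\texttt{BR}^1_A(\overline{y}_t)$, $y'_{t+1}\in\texttt{BR}^2_A(\overline{x}_t)$; $\overline{x}'_{t+1}=\tfrac{t}{t+1}\overline{x}_t+\tfrac{1}{t+1}x'_{t+1}$, $\overline{y}'_{t+1}=\tfrac{t}{t+1}\overline{y}_t+\tfrac{1}{t+1}y'_{t+1}$; $x_{t+1}\in\texttt{BR}^1_A(\overline{y}'_{t+1})$, $y_{t+1}\in\texttt{BR}^2_A(\overline{x}'_{t+1})$; $\overline{x}_{t+1}=\tfrac{1}{t+1}\sum_{k=1}^{t+1}x_k$, $\overline{y}_{t+1}=\tfrac{1}{t+1}\sum_{k=1}^{t+1}y_k$. *)

theory Defs
  imports "HOL-Analysis.Analysis"
begin

definition vmax :: "real^'k \<Rightarrow> real" where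
  "vmax w = Max (range (\<lambda>i. w $ i))"

definition vmin :: "real^'k \<Rightarrow> real" where
  "vmin w = Min (range (\<lambda>i. w $ i))"

definition prob_simplex :: "(real^'k) set" where
  "prob_simplex = {x. (\<forall>i. 0 \<le> x $ i) \<and> (\<Sum>i\<in>UNIV. x $ i) = 1}"

definition game_value :: "real^'n^'m \<Rightarrow> real" where
  "game_value A = (SUP x\<in>(prob_simplex :: (real^'m) set). vmin (x v* A))"

definition BR1 :: "real^'n^'m \<Rightarrow> real^'n \<Rightarrow> (real^'m) set" where
  "BR1 A y = {axis i 1 | i. (A *v y) $ i = vmax (A *v y)}"

definition BR2 :: "real^'n^'m \<Rightarrow> real^'m \<Rightarrow> (real^'n) set" where
  "BR2 A x = {axis j 1 | j. (x v* A) $ j = vmin (x v* A)}"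

definition avg :: "(nat \<Rightarrow> real^'k) \<Rightarrow> nat \<Rightarrow> real^'k" where
  "avg z t = (1 / real t) *\<^sub>R (\<Sum>k=1..t. z k)"

text \<open>Anticipatory fictitious play process: x, y are the played pure strategies
  (indexed from 1), x', y' the anticipatory best responses.\<close>
definition is_AFP :: "real^'n^'m \<Rightarrow> (nat \<Rightarrow> real^'m) \<Rightarrow> (nat \<Rightarrow> real^'n)
    \<Rightarrow> (nat \<Rightarrow> real^'m) \<Rightarrow> (nat \<Rightarrow> real^'n) \<Rightarrow> bool" where
  "is_AFP A x y x' y' \<longleftrightarrow>
     (\<exists>i j. x 1 = axis i 1 \<and> y 1 = axis j 1) \<and>
     (\<forall>t\<ge>1.
        x' (t+1) \<in> BR1 A (avg y t) \<and>
        y' (t+1) \<in> BR2 A (avg x t) \<and>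
        x (t+1) \<in> BR1 A ((real t / real (t+1)) *\<^sub>R avg y t + (1 / real (t+1)) *\<^sub>R y' (t+1)) \<and>
        y (t+1) \<in> BR2 A ((real t / real (t+1)) *\<^sub>R avg x t + (1 / real (t+1)) *\<^sub>R x' (t+1)))"

end

theory Submission
  imports Defs
begin


definition gapf :: "'r set \<Rightarrow> 'c set \<Rightarrow> ('r \<Rightarrow> real) \<Rightarrow> ('c \<Rightarrow> real) \<Rightarrow> real" where
  "gapf I J u v = Max (u ` I) - Min (v ` J)"

definition vsys :: "real \<Rightarrow> real \<Rightarrow> ('r \<Rightarrow> 'c \<Rightarrow> real) \<Rightarrow> 'r set \<Rightarrow> 'c set
   \<Rightarrow> (nat \<Rightarrow> 'r \<Rightarrow> real) \<Rightarrow> (nat \<Rightarrow> 'c \<Rightarrow> real) \<Rightarrow> (nat \<Rightarrow> 'r) \<Rightarrow> (nat \<Rightarrow> 'c) \<Rightarrow> nat \<Rightarrow> bool" where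
  "vsys a0 c a I J U V i j T \<longleftrightarrow> finite I \<and> finite J \<and> I \<noteq> {} \<and> J \<noteq> {} \<and>
     (\<forall>r\<in>I. \<forall>q\<in>J. \<bar>a r q\<bar> \<le> a0) \<and>
     (\<forall>\<tau><T. i \<tau> \<in> I \<and> j \<tau> \<in> J \<and>
        (\<forall>r\<in>I. U (Suc \<tau>) r = U \<tau> r + a r (j \<tau>)) \<and>
        (\<forall>q\<in>J. V (Suc \<tau>) q = V \<tau> q + a (i \<tau>) q) \<and>
        (\<forall>r\<in>I. U \<tau> r \<le> U \<tau> (i \<tau>) + c) \<and>
        (\<forall>q\<in>J. V \<tau> (j \<tau>) \<le> V \<tau> q + c))"

lemma vsys_mono: "vsys a0 c a I J U V i j T \<Longrightarrow> T' \<le> T \<Longrightarrow> vsys a0 c a I J U V i j T'"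
  unfolding vsys_def by auto

lemma a0_nonneg: "vsys a0 c a I J U V i j T \<Longrightarrow> 0 \<le> a0"
proof -
  assume "vsys a0 c a I J U V i j T"
  then obtain r q where "r \<in> I" "q \<in> J" "\<bar>a r q\<bar> \<le> a0" unfolding vsys_def by blast
  then show ?thesis by linarith
qed

lemma U_sum:
  assumes "vsys a0 c a I J U V i j T" "\<tau> \<le> t" "t \<le> T" "r \<in> I"
  shows "U t r = U \<tau> r + (\<Sum>\<sigma>\<in>{\<tau>..<t}. a r (j \<sigma>))"
  using assms(2,3)
proof (induction t)
  case 0
  then show ?case by simp
next
  case (Suc t)
  show ?case
  proof (cases "\<tau> = Suc t")
    case True
    then show ?thesis by simp
  next
    case False
    then have "\<tau> \<le> t" using Suc by simp
    then have "U t r = U \<tau> r + (\<Sum>\<sigma>\<in>{\<tau>..<t}. a r (j \<sigma>))" using Suc by simp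
    moreover have "U (Suc t) r = U t r + a r (j t)" using assms(1,4) Suc(3) unfolding vsys_def by auto
    ultimately show ?thesis using \<open>\<tau> \<le> t\<close> by simp
  qed
qed

lemma V_sum:
  assumes "vsys a0 c a I J U V i j T" "\<tau> \<le> t" "t \<le> T" "q \<in> J"
  shows "V t q = V \<tau> q + (\<Sum>\<sigma>\<in>{\<tau>..<t}. a (i \<sigma>) q)"
  using assms(2,3)
proof (induction t)
  case 0
  then show ?case by simp
next
  case (Suc t)
  show ?case
  proof (cases "\<tau> = Suc t")
    case True
    then show ?thesis by simp
  next
    case False
    then have "\<tau> \<le> t" using Suc by simp
    then have "V t q = V \<tau> q + (\<Sum>\<sigma>\<in>{\<tau>..<t}. a (i \<sigma>) q)" using Suc by simp
    moreover have "V (Suc t) q = V t q + a (i t) q" using assms(1,4) Suc(3) unfolding vsys_def by auto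
    ultimately show ?thesis using \<open>\<tau> \<le> t\<close> by simp
  qed
qed

lemma sum_bound_a:
  assumes "vsys a0 c a I J U V i j T" "r \<in> I" "\<And>\<sigma>. \<sigma> \<in> S \<Longrightarrow> \<sigma> < T" "finite S"
  shows "\<bar>\<Sum>\<sigma>\<in>S. a r (j \<sigma>)\<bar> \<le> a0 * card S"
proof -
  have "\<bar>\<Sum>\<sigma>\<in>S. a r (j \<sigma>)\<bar> \<le> (\<Sum>\<sigma>\<in>S. \<bar>a r (j \<sigma>)\<bar>)" by (rule sum_abs)
  also have "\<dots> \<le> (\<Sum>\<sigma>\<in>S. a0)"
    apply (rule sum_mono) using assms unfolding vsys_def by auto
  finally show ?thesis by (simp add: mult.commute)
qed

lemma sum_bound_a':
  assumes "vsys a0 c a I J U V i j T" "q \<in> J" "\<And>\<sigma>. \<sigma> \<in> S \<Longrightarrow> \<sigma> < T" "finite S"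
  shows "\<bar>\<Sum>\<sigma>\<in>S. a (i \<sigma>) q\<bar> \<le> a0 * card S"
proof -
  have "\<bar>\<Sum>\<sigma>\<in>S. a (i \<sigma>) q\<bar> \<le> (\<Sum>\<sigma>\<in>S. \<bar>a (i \<sigma>) q\<bar>)" by (rule sum_abs)
  also have "\<dots> \<le> (\<Sum>\<sigma>\<in>S. a0)"
    apply (rule sum_mono) using assms unfolding vsys_def by auto
  finally show ?thesis by (simp add: mult.commute)
qed

lemma U_diff:
  assumes "vsys a0 c a I J U V i j T" "\<tau> \<le> t" "t \<le> T" "r \<in> I"
  shows "\<bar>U t r - U \<tau> r\<bar> \<le> a0 * (t - \<tau>)"
  using U_sum[OF assms] sum_bound_a[OF assms(1,4), of "{\<tau>..<t}"] assms by auto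

lemma V_diff:
  assumes "vsys a0 c a I J U V i j T" "\<tau> \<le> t" "t \<le> T" "q \<in> J"
  shows "\<bar>V t q - V \<tau> q\<bar> \<le> a0 * (t - \<tau>)"
  using V_sum[OF assms] sum_bound_a'[OF assms(1,4), of "{\<tau>..<t}"] assms by auto

lemma gap_lin:
  assumes "vsys a0 c a I J U V i j T" "\<tau> \<le> t" "t \<le> T"
  shows "gapf I J (U t) (V t) \<le> gapf I J (U \<tau>) (V \<tau>) + 2 * a0 * (t - \<tau>)"
proof -
  have fin: "finite I" "finite J" "I \<noteq> {}" "J \<noteq> {}" using assms(1) unfolding vsys_def by auto
  have "Max (U t ` I) \<le> Max (U \<tau> ` I) + a0 * (t - \<tau>)"
  proof (subst Max_le_iff)
    show "\<forall>x\<in>U t ` I. x \<le> Max (U \<tau> ` I) + a0 * real (t - \<tau>)"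
    proof
      fix x assume "x \<in> U t ` I"
      then obtain r where r: "r \<in> I" "x = U t r" by auto
      have "U \<tau> r \<le> Max (U \<tau> ` I)" using fin r by auto
      then show "x \<le> Max (U \<tau> ` I) + a0 * real (t - \<tau>)" using U_diff[OF assms r(1)] r by linarith
    qed
  qed (use fin in auto)
  moreover have "Min (V \<tau> ` J) - a0 * (t - \<tau>) \<le> Min (V t ` J)"
  proof (subst Min_ge_iff)
    show "\<forall>x\<in>V t ` J. Min (V \<tau> ` J) - a0 * real (t - \<tau>) \<le> x"
    proof
      fix x assume "x \<in> V t ` J"
      then obtain q where q: "q \<in> J" "x = V t q" by auto
      have "Min (V \<tau> ` J) \<le> V \<tau> q" using fin q by auto
      then show "Min (V \<tau> ` J) - a0 * real (t - \<tau>) \<le> x" using V_diff[OF assms q(1)] q by linarith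
    qed
  qed (use fin in auto)
  ultimately show ?thesis unfolding gapf_def by linarith
qed


lemma all_elig:
  assumes sy: "vsys a0 c a I J U V i j T" and sT: "s < T"
    and eI: "i ` {s..<T} = I" and eJ: "j ` {s..<T} = J"
  shows "gapf I J (U T) (V T) \<le> gapf I J (U 0) (V 0) + 4 * a0 * (T - s) + 2 * c"
proof -
  have fin: "finite I" "finite J" "I \<noteq> {}" "J \<noteq> {}" using sy unfolding vsys_def by auto
  have iI: "\<And>\<tau>. \<tau> < T \<Longrightarrow> i \<tau> \<in> I" and jJ: "\<And>\<tau>. \<tau> < T \<Longrightarrow> j \<tau> \<in> J"
    using sy unfolding vsys_def by auto
  have a: "Max (U T ` I) \<le> U T r + c + 2 * a0 * (T - s)" if r: "r \<in> I" for r
  proof -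
    obtain \<tau> where t: "\<tau> \<in> {s..<T}" "i \<tau> = r" using r eI by force
    show ?thesis
    proof (subst Max_le_iff)
      show "\<forall>x\<in>U T ` I. x \<le> U T r + c + 2 * a0 * real (T - s)"
      proof
        fix x assume "x \<in> U T ` I"
        then obtain r' where r': "r' \<in> I" "x = U T r'" by auto
        have "U \<tau> r' \<le> U \<tau> r + c" using sy t r' unfolding vsys_def by auto
        moreover have "\<bar>U T r' - U \<tau> r'\<bar> \<le> a0 * (T - \<tau>)" using U_diff[OF sy _ _ r'(1), of \<tau> T] t by auto
        moreover have "\<bar>U T r - U \<tau> r\<bar> \<le> a0 * (T - \<tau>)" using U_diff[OF sy _ _ r, of \<tau> T] t by auto
        moreover have "a0 * (T - \<tau>) \<le> a0 * (T - s)"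
          using t a0_nonneg[OF sy] by (intro mult_left_mono) auto
        ultimately show "x \<le> U T r + c + 2 * a0 * real (T - s)" using r' by linarith
      qed
    qed (use fin in auto)
  qed
  have b: "V T q - c - 2 * a0 * (T - s) \<le> Min (V T ` J)" if q: "q \<in> J" for q
  proof -
    obtain \<tau> where t: "\<tau> \<in> {s..<T}" "j \<tau> = q" using q eJ by force
    show ?thesis
    proof (subst Min_ge_iff)
      show "\<forall>x\<in>V T ` J. V T q - c - 2 * a0 * real (T - s) \<le> x"
      proof
        fix x assume "x \<in> V T ` J"
        then obtain q' where q': "q' \<in> J" "x = V T q'" by auto
        have "V \<tau> q \<le> V \<tau> q' + c" using sy t q' unfolding vsys_def by auto
        moreover have "\<bar>V T q' - V \<tau> q'\<bar> \<le> a0 * (T - \<tau>)" using V_diff[OF sy _ _ q'(1), of \<tau> T] t by auto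
        moreover have "\<bar>V T q - V \<tau> q\<bar> \<le> a0 * (T - \<tau>)" using V_diff[OF sy _ _ q, of \<tau> T] t by auto
        moreover have "a0 * (T - \<tau>) \<le> a0 * (T - s)"
          using t a0_nonneg[OF sy] by (intro mult_left_mono) auto
        ultimately show "V T q - c - 2 * a0 * real (T - s) \<le> x" using q' by linarith
      qed
    qed (use fin in auto)
  qed
  have sumU: "(\<Sum>\<tau><T. U T (i \<tau>)) = (\<Sum>\<tau><T. U 0 (i \<tau>)) + (\<Sum>\<tau><T. \<Sum>\<sigma><T. a (i \<tau>) (j \<sigma>))"
  proof -
    have "(\<Sum>\<tau><T. U T (i \<tau>)) = (\<Sum>\<tau><T. U 0 (i \<tau>) + (\<Sum>\<sigma><T. a (i \<tau>) (j \<sigma>)))"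
      apply (rule sum.cong) apply simp
      using U_sum[OF sy, of 0 T] iI by (simp add: atLeast0LessThan)
    then show ?thesis by (simp add: sum.distrib)
  qed
  have sumV: "(\<Sum>\<sigma><T. V T (j \<sigma>)) = (\<Sum>\<sigma><T. V 0 (j \<sigma>)) + (\<Sum>\<tau><T. \<Sum>\<sigma><T. a (i \<tau>) (j \<sigma>))"
  proof -
    have "(\<Sum>\<sigma><T. V T (j \<sigma>)) = (\<Sum>\<sigma><T. V 0 (j \<sigma>) + (\<Sum>\<tau><T. a (i \<tau>) (j \<sigma>)))"
      apply (rule sum.cong) apply simp
      using V_sum[OF sy, of 0 T] jJ by (simp add: atLeast0LessThan)
    also have "\<dots> = (\<Sum>\<sigma><T. V 0 (j \<sigma>)) + (\<Sum>\<sigma><T. \<Sum>\<tau><T. a (i \<tau>) (j \<sigma>))"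
      by (simp add: sum.distrib)
    also have "(\<Sum>\<sigma><T. \<Sum>\<tau><T. a (i \<tau>) (j \<sigma>)) = (\<Sum>\<tau><T. \<Sum>\<sigma><T. a (i \<tau>) (j \<sigma>))"
      by (rule sum.swap)
    finally show ?thesis .
  qed
  have c1: "(\<Sum>\<tau><T. U 0 (i \<tau>)) \<le> (\<Sum>\<tau><T. Max (U 0 ` I))"
    apply (rule sum_mono) using fin iI by auto
  have c2: "(\<Sum>\<tau><T. Min (V 0 ` J)) \<le> (\<Sum>\<tau><T. V 0 (j \<tau>))"
    apply (rule sum_mono) using fin jJ by auto
  have d1: "(\<Sum>\<tau><T. Max (U T ` I)) \<le> (\<Sum>\<tau><T. U T (i \<tau>) + c + 2 * a0 * (T - s))"
    apply (rule sum_mono) using a iI by auto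
  have d2: "(\<Sum>\<tau><T. V T (j \<tau>) - c - 2 * a0 * (T - s)) \<le> (\<Sum>\<tau><T. Min (V T ` J))"
    apply (rule sum_mono) using b jJ by auto
  define K where "K = c + 2 * a0 * (T - s)"
  have d1': "real T * Max (U T ` I) \<le> (\<Sum>\<tau><T. U T (i \<tau>)) + real T * K"
    using d1 unfolding K_def by (simp add: sum.distrib add.assoc)
  have d2': "(\<Sum>\<tau><T. V T (j \<tau>)) - real T * K \<le> real T * Min (V T ` J)"
    using d2 unfolding K_def by (simp add: sum_subtractf diff_diff_eq)
  have c1': "(\<Sum>\<tau><T. U 0 (i \<tau>)) \<le> real T * Max (U 0 ` I)" using c1 by simp
  have c2': "real T * Min (V 0 ` J) \<le> (\<Sum>\<tau><T. V 0 (j \<tau>))" using c2 by simp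
  have "real T * (Max (U T ` I) - Min (V T ` J)) \<le> real T * (Max (U 0 ` I) - Min (V 0 ` J) + 2 * K)"
    using d1' d2' c1' c2' sumU sumV by (simp add: right_diff_distrib distrib_left)
  then have "Max (U T ` I) - Min (V T ` J) \<le> Max (U 0 ` I) - Min (V 0 ` J) + 2 * K"
    using sT by (simp add: mult_le_cancel_left_pos)
  then show ?thesis unfolding gapf_def K_def by simp
qed


lemma restrict_sys:
  assumes sy: "vsys a0 c a I J U V i j T" and sL: "s + L \<le> T" and L: "1 \<le> L"
  shows "vsys a0 c a (i ` {s..<s+L}) (j ` {s..<s+L}) (\<lambda>\<tau>. U (s+\<tau>)) (\<lambda>\<tau>. V (s+\<tau>))
           (\<lambda>\<tau>. i (s+\<tau>)) (\<lambda>\<tau>. j (s+\<tau>)) L"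
proof -
  have sub: "i ` {s..<s+L} \<subseteq> I" "j ` {s..<s+L} \<subseteq> J" using sy sL unfolding vsys_def by auto
  have ne: "i ` {s..<s+L} \<noteq> {}" "j ` {s..<s+L} \<noteq> {}" using L by auto
  show ?thesis
    unfolding vsys_def
  proof (intro conjI ballI allI impI)
    show "finite (i ` {s..<s + L})" "finite (j ` {s..<s + L})" by auto
    show "i ` {s..<s+L} \<noteq> {}" "j ` {s..<s+L} \<noteq> {}" by fact+
  next
    fix r q assume "r \<in> i ` {s..<s + L}" "q \<in> j ` {s..<s + L}"
    then show "\<bar>a r q\<bar> \<le> a0" using sub sy unfolding vsys_def by blast
  next
    fix \<tau> assume t: "\<tau> < L"
    show "i (s + \<tau>) \<in> i ` {s..<s + L}" "j (s + \<tau>) \<in> j ` {s..<s + L}" using t by auto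
    have st: "s + \<tau> < T" using t sL by simp
    show "U (s + Suc \<tau>) r = U (s + \<tau>) r + a r (j (s + \<tau>))" if "r \<in> i ` {s..<s + L}" for r
      using sy st that sub unfolding vsys_def by (auto simp del: image_iff)
    show "V (s + Suc \<tau>) q = V (s + \<tau>) q + a (i (s + \<tau>)) q" if "q \<in> j ` {s..<s + L}" for q
      using sy st that sub unfolding vsys_def by (auto simp del: image_iff)
    show "U (s + \<tau>) r \<le> U (s + \<tau>) (i (s + \<tau>)) + c" if "r \<in> i ` {s..<s + L}" for r
      using sy st that sub unfolding vsys_def by (auto simp del: image_iff)
    show "V (s + \<tau>) (j (s + \<tau>)) \<le> V (s + \<tau>) q + c" if "q \<in> j ` {s..<s + L}" for q
      using sy st that sub unfolding vsys_def by (auto simp del: image_iff)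
  qed
qed

lemma restrict_gap0:
  assumes sy: "vsys a0 c a I J U V i j T" and sL: "s + L \<le> T" and L: "1 \<le> L"
  shows "gapf (i ` {s..<s+L}) (j ` {s..<s+L}) (U s) (V s) \<le> gapf I J (U s) (V s)"
proof -
  have sub: "i ` {s..<s+L} \<subseteq> I" "j ` {s..<s+L} \<subseteq> J" using sy sL unfolding vsys_def by auto
  have ne: "i ` {s..<s+L} \<noteq> {}" "j ` {s..<s+L} \<noteq> {}" using L by auto
  have fin: "finite I" "finite J" using sy unfolding vsys_def by auto
  have "Max (U s ` i ` {s..<s+L}) \<le> Max (U s ` I)"
    using sub ne fin by (intro Max_mono) auto
  moreover have "Min (V s ` J) \<le> Min (V s ` j ` {s..<s+L})"
    using sub ne fin by (intro Min_antimono) auto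
  ultimately show ?thesis unfolding gapf_def by linarith
qed

lemma restrict_gapL:
  assumes sy: "vsys a0 c a I J U V i j T" and sL: "s + L \<le> T" and L: "1 \<le> L"
  shows "gapf I J (U (s+L)) (V (s+L)) \<le> gapf (i ` {s..<s+L}) (j ` {s..<s+L}) (U (s+L)) (V (s+L)) + 2 * c + 4 * a0"
proof -
  have fin: "finite I" "finite J" "I \<noteq> {}" "J \<noteq> {}" using sy unfolding vsys_def by auto
  define \<tau> where "\<tau> = s + L - 1"
  have t: "\<tau> \<in> {s..<s+L}" "Suc \<tau> = s + L" "\<tau> < T" using L sL unfolding \<tau>_def by auto
  have r0: "i \<tau> \<in> I" "j \<tau> \<in> J" using sy t unfolding vsys_def by auto
  have "Max (U (s+L) ` I) \<le> Max (U (s+L) ` i ` {s..<s+L}) + c + 2 * a0"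
  proof (subst Max_le_iff)
    show "\<forall>x\<in>U (s+L) ` I. x \<le> Max (U (s+L) ` i ` {s..<s+L}) + c + 2 * a0"
    proof
      fix x assume "x \<in> U (s+L) ` I"
      then obtain r where r: "r \<in> I" "x = U (s+L) r" by auto
      have "\<bar>U (Suc \<tau>) r - U \<tau> r\<bar> \<le> a0" using U_diff[OF sy _ _ r(1), of \<tau> "Suc \<tau>"] t(3) by simp
      moreover have "\<bar>U (Suc \<tau>) (i \<tau>) - U \<tau> (i \<tau>)\<bar> \<le> a0" using U_diff[OF sy _ _ r0(1), of \<tau> "Suc \<tau>"] t(3) by simp
      moreover have "U \<tau> r \<le> U \<tau> (i \<tau>) + c" using sy t r unfolding vsys_def by auto
      moreover have "U (s+L) (i \<tau>) \<le> Max (U (s+L) ` i ` {s..<s+L})" using t by (intro Max_ge) auto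
      ultimately show "x \<le> Max (U (s+L) ` i ` {s..<s+L}) + c + 2 * a0" using r t(2) by (simp only:)
    qed
  qed (use fin in auto)
  moreover have "Min (V (s+L) ` j ` {s..<s+L}) - c - 2 * a0 \<le> Min (V (s+L) ` J)"
  proof (subst Min_ge_iff)
    show "\<forall>x\<in>V (s+L) ` J. Min (V (s+L) ` j ` {s..<s+L}) - c - 2 * a0 \<le> x"
    proof
      fix x assume "x \<in> V (s+L) ` J"
      then obtain q where q: "q \<in> J" "x = V (s+L) q" by auto
      have "\<bar>V (Suc \<tau>) q - V \<tau> q\<bar> \<le> a0" using V_diff[OF sy _ _ q(1), of \<tau> "Suc \<tau>"] t(3) by simp
      moreover have "\<bar>V (Suc \<tau>) (j \<tau>) - V \<tau> (j \<tau>)\<bar> \<le> a0" using V_diff[OF sy _ _ r0(2), of \<tau> "Suc \<tau>"] t(3) by simp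
      moreover have "V \<tau> (j \<tau>) \<le> V \<tau> q + c" using sy t q unfolding vsys_def by auto
      moreover have "Min (V (s+L) ` j ` {s..<s+L}) \<le> V (s+L) (j \<tau>)" using t by (intro Min_le) auto
      ultimately show "Min (V (s+L) ` j ` {s..<s+L}) - c - 2 * a0 \<le> x" using q t(2) by (simp only:)
    qed
  qed (use fin in auto)
  ultimately show ?thesis unfolding gapf_def by linarith
qed


lemma ind_sum_bound:
  fixes d B :: real and P :: "nat \<Rightarrow> bool"
  assumes "\<And>t. t < T \<Longrightarrow> P t \<Longrightarrow> real t * d \<le> B"
  shows "(\<Sum>\<sigma><T. if P \<sigma> then d else 0) \<le> max 0 (B + d)"
proof (cases "d \<le> 0")
  case True
  have "(\<Sum>\<sigma><T. if P \<sigma> then d else 0) \<le> (\<Sum>\<sigma><T. 0)" by (rule sum_mono) (use True in auto)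
  then show ?thesis by simp
next
  case False
  have "\<forall>t\<le>T. (\<Sum>\<sigma><t. if P \<sigma> then d else 0) \<le> real t * d \<and> (\<Sum>\<sigma><t. if P \<sigma> then d else 0) \<le> max 0 (B + d)"
  proof (intro allI impI)
    fix t assume "t \<le> T"
    then show "(\<Sum>\<sigma><t. if P \<sigma> then d else 0) \<le> real t * d \<and> (\<Sum>\<sigma><t. if P \<sigma> then d else 0) \<le> max 0 (B + d)"
    proof (induction t)
      case 0
      then show ?case by simp
    next
      case (Suc t)
      then have IH: "(\<Sum>\<sigma><t. if P \<sigma> then d else 0) \<le> real t * d"
          "(\<Sum>\<sigma><t. if P \<sigma> then d else 0) \<le> max 0 (B + d)" by auto
      show ?case
      proof (cases "P t")
        case True
        then have "real t * d \<le> B" using assms Suc by auto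
        then show ?thesis using IH True False by (simp add: algebra_simps)
      next
        case f2: False
        then show ?thesis using IH False by (simp add: algebra_simps)
      qed
    qed
  qed
  then show ?thesis by simp
qed

lemma base_row:
  assumes sy: "vsys a0 c a I J U V i j T" and I1: "I = {r0}" and J2: "card J \<le> 2" and c0: "0 \<le> c"
  shows "gapf I J (U T) (V T) \<le> gapf I J (U 0) (V 0) + c + 2 * a0"
proof -
  have fin: "finite J" "J \<noteq> {}" using sy unfolding vsys_def by auto
  have ir: "\<And>\<sigma>. \<sigma> < T \<Longrightarrow> i \<sigma> = r0" and jJ: "\<And>\<sigma>. \<sigma> < T \<Longrightarrow> j \<sigma> \<in> J"
    using sy I1 unfolding vsys_def by auto
  have ab: "\<And>q. q \<in> J \<Longrightarrow> \<bar>a r0 q\<bar> \<le> a0" using sy I1 unfolding vsys_def by auto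
  have Vt: "V t q = V 0 q + real t * a r0 q" if "t \<le> T" "q \<in> J" for t q
  proof -
    have "V t q = V 0 q + (\<Sum>\<sigma>\<in>{0..<t}. a (i \<sigma>) q)" using V_sum[OF sy _ that(1) that(2), of 0] by simp
    also have "(\<Sum>\<sigma>\<in>{0..<t}. a (i \<sigma>) q) = (\<Sum>\<sigma>\<in>{0..<t}. a r0 q)"
      using ir that(1) by (intro sum.cong) auto
    finally show ?thesis by simp
  qed
  have UT: "U T r0 = U 0 r0 + (\<Sum>\<sigma><T. a r0 (j \<sigma>))"
    using U_sum[OF sy, of 0 T r0] I1 by (simp add: atLeast0LessThan)
  have key: "(\<Sum>\<sigma><T. a r0 (j \<sigma>)) - real T * a r0 q \<le> V 0 q - Min (V 0 ` J) + c + 2 * a0"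
    if q: "q \<in> J" for q
  proof -
    obtain q2 where q2: "q2 \<in> J" "J \<subseteq> {q, q2}"
    proof (cases "J - {q} = {}")
      case True
      then show ?thesis using that q by blast
    next
      case False
      then obtain q2 where "q2 \<in> J" "q2 \<noteq> q" by blast
      moreover have "{q, q2} \<subseteq> J" using q \<open>q2 \<in> J\<close> by auto
      moreover have "card {q, q2} = 2" using \<open>q2 \<noteq> q\<close> by simp
      ultimately have "{q, q2} = J" using card_subset_eq[OF fin(1)] J2
        by (metis card_mono fin(1) le_antisym)
      then show ?thesis using that \<open>q2 \<in> J\<close> by blast
    qed
    define d where "d = a r0 q2 - a r0 q"
    define B where "B = V 0 q - V 0 q2 + c"
    have "(\<Sum>\<sigma><T. a r0 (j \<sigma>)) - real T * a r0 q = (\<Sum>\<sigma><T. a r0 (j \<sigma>) - a r0 q)"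
      by (simp add: sum_subtractf)
    also have "\<dots> = (\<Sum>\<sigma><T. if j \<sigma> = q2 then d else 0)"
    proof (rule sum.cong)
      fix \<sigma> assume "\<sigma> \<in> {..<T}"
      then have "j \<sigma> \<in> {q, q2}" using jJ q2 by auto
      then show "a r0 (j \<sigma>) - a r0 q = (if j \<sigma> = q2 then d else 0)" unfolding d_def by auto
    qed simp
    also have "\<dots> \<le> max 0 (B + d)"
    proof (rule ind_sum_bound)
      fix t assume t: "t < T" "j t = q2"
      have "V t (j t) \<le> V t q + c" using sy t q unfolding vsys_def by auto
      then show "real t * d \<le> B" using Vt[of t q] Vt[of t q2] t q q2 unfolding d_def B_def
        by (simp add: algebra_simps)
    qed
    also have "\<dots> \<le> V 0 q - Min (V 0 ` J) + c + 2 * a0"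
    proof -
      have "Min (V 0 ` J) \<le> V 0 q2" "Min (V 0 ` J) \<le> V 0 q" using q2 q fin by auto
      moreover have "d \<le> 2 * a0" using ab[OF q] ab[OF q2(1)] unfolding d_def by linarith
      moreover have "0 \<le> a0" using ab[OF q] by linarith
      ultimately show ?thesis unfolding B_def using c0 by linarith
    qed
    finally show ?thesis .
  qed
  have "Min (V T ` J) \<in> V T ` J" using fin by (intro Min_in) auto
  then obtain qm where qm: "qm \<in> J" "Min (V T ` J) = V T qm" by auto
  have "gapf I J (U T) (V T) = U T r0 - V T qm" unfolding gapf_def using I1 qm by simp
  also have "\<dots> = U 0 r0 + ((\<Sum>\<sigma><T. a r0 (j \<sigma>)) - real T * a r0 qm) - V 0 qm"
    using UT Vt[of T qm] qm by simp
  also have "\<dots> \<le> U 0 r0 - Min (V 0 ` J) + c + 2 * a0" using key[OF qm(1)] by simp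
  also have "\<dots> = gapf I J (U 0) (V 0) + c + 2 * a0" unfolding gapf_def using I1 by simp
  finally show ?thesis .
qed


lemma transpose_sys:
  assumes "vsys a0 c a I J U V i j T"
  shows "vsys a0 c (\<lambda>q r. - a r q) J I (\<lambda>\<tau> q. - V \<tau> q) (\<lambda>\<tau> r. - U \<tau> r) j i T"
  using assms unfolding vsys_def by (auto simp: algebra_simps)

lemma transpose_gap:
  assumes "finite I" "finite J" "I \<noteq> {}" "J \<noteq> {}"
  shows "gapf J I (\<lambda>q. - v q) (\<lambda>r. - u r) = gapf I J u v"
proof -
  have "Max ((\<lambda>q. - v q) ` J) = - Min (v ` J)"
    using minus_Min_eq_Max[of "v ` J"] assms by (simp add: image_image)
  moreover have "Min ((\<lambda>r. - u r) ` I) = - Max (u ` I)"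
    using minus_Max_eq_Min[of "u ` I"] assms by (simp add: image_image)
  ultimately show ?thesis unfolding gapf_def by simp
qed

lemma base3:
  assumes sy: "vsys a0 c a I J U V i j T" and k: "card I + card J \<le> 3" and c0: "0 \<le> c"
  shows "gapf I J (U T) (V T) \<le> gapf I J (U 0) (V 0) + c + 2 * a0"
proof -
  have fin: "finite I" "finite J" "I \<noteq> {}" "J \<noteq> {}" using sy unfolding vsys_def by auto
  then have cI: "card I \<ge> 1" and cJ: "card J \<ge> 1" by (auto simp: Suc_le_eq card_gt_0_iff)
  show ?thesis
  proof (cases "card I = 1")
    case True
    then obtain r0 where "I = {r0}" by (auto simp: card_1_singleton_iff)
    then show ?thesis using base_row[OF sy _ _ c0] k True by auto
  next
    case False
    then have "card J = 1" "card I \<le> 2" using cI cJ k by auto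
    then obtain q0 where q0: "J = {q0}" by (auto simp: card_1_singleton_iff)
    have "gapf J I (\<lambda>q. - V T q) (\<lambda>r. - U T r) \<le> gapf J I (\<lambda>q. - V 0 q) (\<lambda>r. - U 0 r) + c + 2 * a0"
      using base_row[OF transpose_sys[OF sy] q0 \<open>card I \<le> 2\<close> c0] .
    then show ?thesis using transpose_gap[OF fin] by simp
  qed
qed

lemma scan:
  fixes g :: "nat \<Rightarrow> real"
  assumes L: "1 \<le> L" and E: "0 \<le> E" and M: "0 \<le> M"
    and init: "\<And>n. n \<le> T \<Longrightarrow> n < L \<Longrightarrow> g n \<le> g 0 + M"
    and win: "\<And>s. s + L \<le> T \<Longrightarrow> g (s+L) \<le> g s + E \<or> g (s+L) \<le> g 0 + M"
  shows "g T \<le> g 0 + M + real (T div L) * E"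
proof -
  have "\<forall>n. n \<le> T \<longrightarrow> g n \<le> g 0 + M + real (n div L) * E"
  proof (intro allI)
    fix n show "n \<le> T \<longrightarrow> g n \<le> g 0 + M + real (n div L) * E"
    proof (induction n rule: less_induct)
      case (less n)
      show ?case
      proof
        assume nT: "n \<le> T"
        show "g n \<le> g 0 + M + real (n div L) * E"
        proof (cases "n < L")
          case True
          then show ?thesis using init[OF nT True] E by simp
        next
          case False
          define s where "s = n - L"
          have ns: "n = s + L" using False unfolding s_def by simp
          have sl: "s < n" using L ns by simp
          have IH: "g s \<le> g 0 + M + real (s div L) * E" using less.IH[OF sl] sl nT by simp
          have dv: "n div L = Suc (s div L)" using ns L by (simp add: div_add_self2)
          from win[of s] ns nT
          have "g n \<le> g s + E \<or> g n \<le> g 0 + M" by simp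
          then show ?thesis
          proof
            assume "g n \<le> g s + E"
            then show ?thesis using IH dv by (simp add: algebra_simps)
          next
            assume "g n \<le> g 0 + M"
            moreover have "0 \<le> real (n div L) * E" using E by simp
            ultimately show ?thesis by linarith
          qed
        qed
      qed
    qed
  qed
  then show ?thesis by simp
qed

lemma powr_alg:
  fixes T L \<beta> \<gamma> :: real
  assumes T: "1 \<le> T" and L: "T powr \<gamma> \<le> L" and b: "\<beta> \<le> 1" and e: "1 + \<gamma> * (\<beta> - 1) = \<gamma>"
  shows "(T / L) * (L powr \<beta>) \<le> T powr \<gamma>"
proof -
  have Lp: "0 < L" using L T by (smt (verit) powr_gt_zero)
  have "(T / L) * (L powr \<beta>) = T * L powr (\<beta> - 1)"
    using Lp by (simp add: powr_diff)
  also have "\<dots> \<le> T * (T powr \<gamma>) powr (\<beta> - 1)"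
    using L T b by (intro mult_left_mono powr_mono2') auto
  also have "\<dots> = T powr (1 + \<gamma> * (\<beta> - 1))"
    using T by (simp add: powr_powr powr_add)
  finally show ?thesis using e by simp
qed


lemma main_rate:
  fixes a :: "'r \<Rightarrow> 'c \<Rightarrow> real" and a0 c :: real
  assumes c0: "0 \<le> c" and a00: "0 \<le> a0" and k: "3 \<le> k"
  shows "\<exists>C\<ge>0. \<forall>(I::'r set) (J::'c set) U V i j T. vsys a0 c a I J U V i j T \<and> card I + card J \<le> k \<and> 1 \<le> T
     \<longrightarrow> gapf I J (U T) (V T) \<le> gapf I J (U 0) (V 0) + C * real T powr ((real k - 3) / (real k - 2))"
  using k
proof (induction k rule: dec_induct)
  case base
  show ?case
  proof (rule exI[of _ "c + 2*a0"], intro conjI allI impI)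
    show "0 \<le> c + 2 * a0" using c0 a00 by simp
  next
    fix I :: "'r set" and J :: "'c set" and U V i j T
    assume "vsys a0 c a I J U V i j T \<and> card I + card J \<le> 3 \<and> 1 \<le> T"
    then show "gapf I J (U T) (V T) \<le> gapf I J (U 0) (V 0) + (c + 2 * a0) * real T powr ((real 3 - 3) / (real 3 - 2))"
      using base3[of a0 c a I J U V i j T] c0 by simp
  qed
next
  case (step k)
  from step.IH obtain C' where C'0: "C' \<ge> 0" and C':
    "\<And>(I::'r set) (J::'c set) U V i j T. vsys a0 c a I J U V i j T \<Longrightarrow> card I + card J \<le> k \<Longrightarrow> 1 \<le> T
     \<Longrightarrow> gapf I J (U T) (V T) \<le> gapf I J (U 0) (V 0) + C' * real T powr ((real k - 3) / (real k - 2))"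
    by blast
  define \<beta> where "\<beta> = (real k - 3) / (real k - 2)"
  define \<gamma> where "\<gamma> = (real (Suc k) - 3) / (real (Suc k) - 2)"
  have kr: "3 \<le> real k" using step by simp
  have b0: "0 \<le> \<beta>" and b1: "\<beta> \<le> 1" unfolding \<beta>_def using kr by (auto simp: field_simps)
  have g0: "0 \<le> \<gamma>" and g1: "\<gamma> \<le> 1" and gh: "1 - \<gamma> \<le> \<gamma>" unfolding \<gamma>_def using kr by (auto simp: field_simps)
  have ge: "1 + \<gamma> * (\<beta> - 1) = \<gamma>" unfolding \<gamma>_def \<beta>_def using kr by (simp add: field_simps)
  define C where "C = 12 * a0 + 4 * c + C'"
  show ?case
  proof (rule exI[of _ C], intro conjI allI impI)
    show "0 \<le> C" unfolding C_def using a00 c0 C'0 by simp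
  next
    fix I :: "'r set" and J :: "'c set" and U V i j T
    assume H: "vsys a0 c a I J U V i j T \<and> card I + card J \<le> Suc k \<and> 1 \<le> T"
    then have sy: "vsys a0 c a I J U V i j T" and kk: "card I + card J \<le> Suc k" and T1: "1 \<le> T" by auto
    have fin: "finite I" "finite J" using sy unfolding vsys_def by auto
    have Tr: "1 \<le> real T" using T1 by simp
    have Tg: "1 \<le> real T powr \<gamma>" using Tr g0 by (rule ge_one_powr_ge_zero)
    define L where "L = nat \<lceil>real T powr \<gamma>\<rceil>"
    have Lr: "real L = of_int \<lceil>real T powr \<gamma>\<rceil>" unfolding L_def using Tg by simp
    have TL: "real T powr \<gamma> \<le> real L" using Lr by linarith
    have L1: "1 \<le> L" using TL Tg by linarith
    have L2: "real L \<le> 2 * real T powr \<gamma>" using Lr Tg by linarith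
    define E where "E = C' * real L powr \<beta> + 2 * c + 4 * a0"
    define M where "M = 4 * a0 * real L + 2 * c"
    define g where "g = (\<lambda>n. gapf I J (U n) (V n))"
    have E0: "0 \<le> E" unfolding E_def using C'0 c0 a00 by simp
    have M0: "0 \<le> M" unfolding M_def using c0 a00 by simp
    have "g T \<le> g 0 + M + real (T div L) * E"
    proof (rule scan[OF L1 E0 M0])
      fix n assume n: "n \<le> T" "n < L"
      have "g n \<le> g 0 + 2 * a0 * real (n - 0)" unfolding g_def using gap_lin[OF sy, of 0 n] n by simp
      moreover have "2 * a0 * real n \<le> 4 * a0 * real L" using n a00
        by (intro mult_mono) auto
      ultimately show "g n \<le> g 0 + M" unfolding M_def using c0 by simp
    next
      fix s assume sL: "s + L \<le> T"
      show "g (s + L) \<le> g s + E \<or> g (s + L) \<le> g 0 + M"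
      proof (cases "i ` {s..<s+L} = I \<and> j ` {s..<s+L} = J")
        case True
        have "g (s+L) \<le> g 0 + 4 * a0 * real (s + L - s) + 2 * c"
          unfolding g_def
          by (rule all_elig[OF vsys_mono[OF sy sL]]) (use True L1 in auto)
        then show ?thesis unfolding M_def by simp
      next
        case False
        have sub: "i ` {s..<s+L} \<subseteq> I" "j ` {s..<s+L} \<subseteq> J" using sy sL unfolding vsys_def by auto
        have "card (i ` {s..<s+L}) + card (j ` {s..<s+L}) < card I + card J"
        proof (cases "i ` {s..<s+L} = I")
          case True
          then have "j ` {s..<s+L} \<subset> J" using False sub by auto
          then have "card (j ` {s..<s+L}) < card J" using fin by (intro psubset_card_mono) auto
          then show ?thesis using True by simp
        next
          case f2: False
          then have "i ` {s..<s+L} \<subset> I" using sub by auto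
          then have "card (i ` {s..<s+L}) < card I" using fin by (intro psubset_card_mono) auto
          moreover have "card (j ` {s..<s+L}) \<le> card J" using fin sub by (intro card_mono) auto
          ultimately show ?thesis by simp
        qed
        then have ck: "card (i ` {s..<s+L}) + card (j ` {s..<s+L}) \<le> k" using kk by simp
        have "gapf (i ` {s..<s+L}) (j ` {s..<s+L}) (U (s+L)) (V (s+L))
            \<le> gapf (i ` {s..<s+L}) (j ` {s..<s+L}) (U (s+0)) (V (s+0)) + C' * real L powr \<beta>"
          using C'[OF restrict_sys[OF sy sL L1] ck L1] unfolding \<beta>_def by simp
        then have "g (s+L) \<le> g s + E"
          using restrict_gap0[OF sy sL L1] restrict_gapL[OF sy sL L1] unfolding g_def E_def by simp
        then show ?thesis by simp
      qed
    qed
    moreover have "real (T div L) * E \<le> (real T / real L) * E"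
      using E0 by (intro mult_right_mono of_nat_div_le_of_nat) auto
    moreover have "(real T / real L) * E \<le> C' * real T powr \<gamma> + (2 * c + 4 * a0) * real T powr \<gamma>"
    proof -
      have p1: "(real T / real L) * real L powr \<beta> \<le> real T powr \<gamma>"
        using powr_alg[OF Tr TL b1 ge] .
      have "real T / real L \<le> real T / real T powr \<gamma>"
        using TL Tg by (intro divide_left_mono) (simp, simp, smt (verit) mult_pos_pos)
      also have "\<dots> = real T powr (1 - \<gamma>)" using Tr by (simp add: powr_diff)
      also have "\<dots> \<le> real T powr \<gamma>" using gh Tr by (rule powr_mono)
      finally have p2: "real T / real L \<le> real T powr \<gamma>" .
      have "(real T / real L) * E = C' * ((real T / real L) * real L powr \<beta>) + (2 * c + 4 * a0) * (real T / real L)"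
        unfolding E_def by (simp add: algebra_simps)
      also have "\<dots> \<le> C' * real T powr \<gamma> + (2 * c + 4 * a0) * real T powr \<gamma>"
        using p1 p2 C'0 c0 a00 by (intro add_mono mult_left_mono) auto
      finally show ?thesis .
    qed
    moreover have "M \<le> (8 * a0 + 2 * c) * real T powr \<gamma>"
    proof -
      have "4 * a0 * real L \<le> 4 * a0 * (2 * real T powr \<gamma>)" using L2 a00 by (intro mult_left_mono) auto
      moreover have "2 * c * 1 \<le> 2 * c * real T powr \<gamma>" using Tg c0 by (intro mult_left_mono) auto
      ultimately show ?thesis unfolding M_def by (simp add: algebra_simps)
    qed
    ultimately have "g T \<le> g 0 + C * real T powr \<gamma>" unfolding C_def by (simp add: algebra_simps)
    then show "gapf I J (U T) (V T) \<le> gapf I J (U 0) (V 0) + C * real T powr ((real (Suc k) - 3) / (real (Suc k) - 2))"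
      unfolding g_def \<gamma>_def .
  qed
qed



lemma mv_comp: "(A *v v) $ r = (\<Sum>q\<in>UNIV. A $ r $ q * v $ q)"
  by (simp add: matrix_vector_mult_def)

lemma vm_comp: "(v v* A) $ q = (\<Sum>r\<in>UNIV. v $ r * A $ r $ q)"
  by (simp add: vector_matrix_mult_def)

lemma mv_axis: "((A::real^'n^'m) *v axis j 1) $ r = A $ r $ j"
  by (simp add: mv_comp axis_def if_distrib cong: if_cong)

lemma vm_axis: "(axis i 1 v* (A::real^'n^'m)) $ q = A $ i $ q"
proof -
  have "(axis i 1 v* A) $ q = (transpose A *v axis i 1) $ q" by simp
  also have "\<dots> = transpose A $ q $ i" by (rule mv_axis)
  finally show ?thesis by (simp add: transpose_def)
qed

lemma mv_lin: "((A::real^'n^'m) *v (\<alpha> *\<^sub>R u + \<beta> *\<^sub>R w)) $ r = \<alpha> * (A *v u) $ r + \<beta> * (A *v w) $ r"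
  by (simp add: algebra_simps matrix_vector_mult_scaleR)

lemma vm_lin: "((\<alpha> *\<^sub>R u + \<beta> *\<^sub>R w) v* (A::real^'n^'m)) $ r = \<alpha> * (u v* A) $ r + \<beta> * (w v* A) $ r"
  by (simp add: algebra_simps vector_matrix_left_distrib vm_comp sum_distrib_left)

lemma mv_avg: "((A::real^'n^'m) *v avg y t) $ r = (\<Sum>k=1..t. (A *v y k) $ r) / real t"
proof -
  have "A *v avg y t = (1 / real t) *\<^sub>R (\<Sum>k=1..t. A *v y k)"
    unfolding avg_def by (simp add: matrix_vector_mult_scaleR linear_sum[OF matrix_vector_mul_linear] o_def)
  then show ?thesis by simp
qed

lemma vm_avg: "(avg x t v* (A::real^'n^'m)) $ q = (\<Sum>k=1..t. (x k v* A) $ q) / real t"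
  using mv_avg[of "transpose A" x t q] by simp

lemma minmax_le:
  fixes A :: "real^'n^'m"
  assumes x: "x \<in> prob_simplex" and y: "y \<in> prob_simplex"
  shows "vmin (x v* A) \<le> vmax (A *v y)"
proof -
  have x0: "\<And>r. 0 \<le> x $ r" "(\<Sum>r\<in>UNIV. x $ r) = 1" using x unfolding prob_simplex_def by auto
  have y0: "\<And>r. 0 \<le> y $ r" "(\<Sum>r\<in>UNIV. y $ r) = 1" using y unfolding prob_simplex_def by auto
  have "vmin (x v* A) = (\<Sum>q\<in>UNIV. y $ q * vmin (x v* A))" using y0 by (simp add: sum_distrib_right[symmetric])
  also have "\<dots> \<le> (\<Sum>q\<in>UNIV. y $ q * (x v* A) $ q)"
    using y0 by (intro sum_mono mult_left_mono) (auto simp: vmin_def)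
  also have "\<dots> = (\<Sum>q\<in>UNIV. \<Sum>r\<in>UNIV. x $ r * (A $ r $ q * y $ q))"
    by (simp add: vm_comp sum_distrib_left mult_ac)
  also have "\<dots> = (\<Sum>r\<in>UNIV. \<Sum>q\<in>UNIV. x $ r * (A $ r $ q * y $ q))"
    by (rule sum.swap)
  also have "\<dots> = (\<Sum>r\<in>UNIV. x $ r * (A *v y) $ r)"
    by (simp add: mv_comp sum_distrib_left)
  also have "\<dots> \<le> (\<Sum>r\<in>UNIV. x $ r * vmax (A *v y))"
    using x0 by (intro sum_mono mult_left_mono) (auto simp: vmax_def)
  also have "\<dots> = vmax (A *v y)" using x0 by (simp add: sum_distrib_right[symmetric])
  finally show ?thesis .
qed

lemma axis_inj: "axis i (1::real) = axis j 1 \<Longrightarrow> i = j"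
  by (metis axis_nth axis_eq_axis zero_neq_one)


theorem proposition1:
  fixes A :: "real^'n^'m"
    and x x' :: "nat \<Rightarrow> real^'m"
    and y y' :: "nat \<Rightarrow> real^'n"
  assumes "is_AFP A x y x' y'"
  shows "(\<lambda>t. vmin (avg x t v* A)) \<longlonglongrightarrow> game_value A
       \<and> (\<lambda>t. vmax (A *v avg y t)) \<longlonglongrightarrow> game_value A
       \<and> (\<exists>C. \<forall>t\<ge>1. vmax (A *v avg y t) - vmin (avg x t v* A)
              \<le> C * real t powr (- 1 / (real CARD('m) + real CARD('n) - 2)))"
proof -
  obtain i0 j0 where x1: "x 1 = axis i0 1" and y1: "y 1 = axis j0 1"
    using assms unfolding is_AFP_def by blast
  have BR: "\<And>t. 1 \<le> t \<Longrightarrow> x' (t+1) \<in> BR1 A (avg y t) \<and>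
        y' (t+1) \<in> BR2 A (avg x t) \<and>
        x (t+1) \<in> BR1 A ((real t / real (t+1)) *\<^sub>R avg y t + (1 / real (t+1)) *\<^sub>R y' (t+1)) \<and>
        y (t+1) \<in> BR2 A ((real t / real (t+1)) *\<^sub>R avg x t + (1 / real (t+1)) *\<^sub>R x' (t+1))"
    using assms unfolding is_AFP_def by blast
  have xex: "\<exists>i. x (Suc \<tau>) = axis i 1" for \<tau>
  proof (cases \<tau>)
    case 0 then show ?thesis using x1 by auto
  next
    case (Suc n) then show ?thesis using BR[of \<tau>] unfolding BR1_def by auto
  qed
  have yex: "\<exists>j. y (Suc \<tau>) = axis j 1" for \<tau>
  proof (cases \<tau>)
    case 0 then show ?thesis using y1 by auto
  next
    case (Suc n) then show ?thesis using BR[of \<tau>] unfolding BR2_def by auto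
  qed
  define ii where "ii \<tau> = (SOME i. x (Suc \<tau>) = axis i 1)" for \<tau>
  define jj where "jj \<tau> = (SOME j. y (Suc \<tau>) = axis j 1)" for \<tau>
  have xii: "x (Suc \<tau>) = axis (ii \<tau>) 1" for \<tau> unfolding ii_def using someI_ex[OF xex] .
  have yjj: "y (Suc \<tau>) = axis (jj \<tau>) 1" for \<tau> unfolding jj_def using someI_ex[OF yex] .
  define a0 where "a0 = (\<Sum>r\<in>UNIV. \<Sum>q\<in>UNIV. \<bar>A $ r $ q\<bar>)"
  have ab: "\<bar>A $ r $ q\<bar> \<le> a0" for r q
  proof -
    have "\<bar>A $ r $ q\<bar> \<le> (\<Sum>q\<in>UNIV. \<bar>A $ r $ q\<bar>)" by (rule member_le_sum) auto
    also have "\<dots> \<le> a0" unfolding a0_def by (rule member_le_sum) (auto intro: sum_nonneg)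
    finally show ?thesis .
  qed
  have a00: "0 \<le> a0" using ab[of undefined undefined] by linarith
  define U where "U \<tau> r = (\<Sum>k=1..\<tau>. (A *v y k) $ r)" for \<tau> r
  define V where "V \<tau> q = (\<Sum>k=1..\<tau>. (x k v* A) $ q)" for \<tau> q
  have Ustep: "U (Suc \<tau>) r = U \<tau> r + A $ r $ jj \<tau>" for \<tau> r
    unfolding U_def by (simp add: yjj mv_axis)
  have Vstep: "V (Suc \<tau>) q = V \<tau> q + A $ ii \<tau> $ q" for \<tau> q
    unfolding V_def by (simp add: xii vm_axis)
  have U0: "U 0 r = 0" for r unfolding U_def by simp
  have V0: "V 0 q = 0" for q unfolding V_def by simp
  have slackU: "U \<tau> r \<le> U \<tau> (ii \<tau>) + 2 * a0" for \<tau> r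
  proof (cases "\<tau> = 0")
    case True then show ?thesis using U0 a00 by simp
  next
    case False
    then have t1: "1 \<le> \<tau>" by simp
    define w where "w = (real \<tau> / real (\<tau>+1)) *\<^sub>R avg y \<tau> + (1 / real (\<tau>+1)) *\<^sub>R y' (\<tau>+1)"
    from BR[OF t1] obtain j' where j': "y' (\<tau>+1) = axis j' 1" unfolding BR2_def by auto
    from BR[OF t1] obtain i where i: "x (\<tau>+1) = axis i 1" "(A *v w) $ i = vmax (A *v w)"
      unfolding BR1_def w_def by auto
    have "i = ii \<tau>" using i(1) xii[of \<tau>] axis_inj by (metis Suc_eq_plus1)
    have wr: "(A *v w) $ r' = (U \<tau> r' + A $ r' $ j') / real (\<tau>+1)" for r'
    proof -
      have tt: "real \<tau> / real (\<tau>+1) * (z / real \<tau>) = z / real (\<tau>+1)" for z using t1 by simp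
      show ?thesis
        unfolding w_def mv_lin mv_avg j' mv_axis U_def tt by (simp add: add_divide_distrib)
    qed
    have "(A *v w) $ r \<le> vmax (A *v w)" unfolding vmax_def by (intro Max_ge) auto
    then have "(U \<tau> r + A $ r $ j') / real (\<tau>+1) \<le> (U \<tau> (ii \<tau>) + A $ ii \<tau> $ j') / real (\<tau>+1)"
      using wr i(2) \<open>i = ii \<tau>\<close> by metis
    then have "U \<tau> r + A $ r $ j' \<le> U \<tau> (ii \<tau>) + A $ ii \<tau> $ j'"
      by (simp add: divide_le_cancel)
    then show ?thesis using ab[of r j'] ab[of "ii \<tau>" j'] by linarith
  qed
  have slackV: "V \<tau> (jj \<tau>) \<le> V \<tau> q + 2 * a0" for \<tau> q
  proof (cases "\<tau> = 0")
    case True then show ?thesis using V0 a00 by simp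
  next
    case False
    then have t1: "1 \<le> \<tau>" by simp
    define w where "w = (real \<tau> / real (\<tau>+1)) *\<^sub>R avg x \<tau> + (1 / real (\<tau>+1)) *\<^sub>R x' (\<tau>+1)"
    from BR[OF t1] obtain i' where i': "x' (\<tau>+1) = axis i' 1" unfolding BR1_def by auto
    from BR[OF t1] obtain j where j: "y (\<tau>+1) = axis j 1" "(w v* A) $ j = vmin (w v* A)"
      unfolding BR2_def w_def by auto
    have "j = jj \<tau>" using j(1) yjj[of \<tau>] axis_inj by (metis Suc_eq_plus1)
    have wr: "(w v* A) $ q' = (V \<tau> q' + A $ i' $ q') / real (\<tau>+1)" for q'
    proof -
      have tt: "real \<tau> / real (\<tau>+1) * (z / real \<tau>) = z / real (\<tau>+1)" for z using t1 by simp
      show ?thesis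
        unfolding w_def vm_lin vm_avg i' vm_axis V_def tt by (simp add: add_divide_distrib)
    qed
    have "vmin (w v* A) \<le> (w v* A) $ q" unfolding vmin_def by (intro Min_le) auto
    then have "(V \<tau> (jj \<tau>) + A $ i' $ jj \<tau>) / real (\<tau>+1) \<le> (V \<tau> q + A $ i' $ q) / real (\<tau>+1)"
      using wr j(2) \<open>j = jj \<tau>\<close> by metis
    then have "V \<tau> (jj \<tau>) + A $ i' $ jj \<tau> \<le> V \<tau> q + A $ i' $ q"
      by (simp add: divide_le_cancel)
    then show ?thesis using ab[of i' q] ab[of i' "jj \<tau>"] by linarith
  qed
  have sy: "vsys a0 (2 * a0) (\<lambda>r q. A $ r $ q) UNIV UNIV U V ii jj T" for T
    unfolding vsys_def using ab Ustep Vstep slackU slackV by auto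
  define K where "K = max 3 (CARD('m) + CARD('n))"
  obtain C where C0: "0 \<le> C" and C: "\<And>T. 1 \<le> T \<Longrightarrow>
     gapf UNIV UNIV (U T) (V T) \<le> gapf (UNIV::'m set) (UNIV::'n set) (U 0) (V 0) + C * real T powr ((real K - 3) / (real K - 2))"
    using main_rate[of "2 * a0" a0 K "\<lambda>r q. A $ r $ q"] a00 sy unfolding K_def by fastforce
  have g0: "gapf (UNIV::'m set) (UNIV::'n set) (U 0) (V 0) = 0" unfolding gapf_def U0 V0 by simp
  define \<beta> where "\<beta> = (real K - 3) / (real K - 2)"
  have K3: "3 \<le> real K" unfolding K_def by simp
  have b0: "0 \<le> \<beta>" "\<beta> < 1" unfolding \<beta>_def using K3 by (auto simp: field_simps)
  have vmax_eq: "vmax (A *v avg y t) = Max (range (U t)) / real t" for t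
  proof -
    have "vmax (A *v avg y t) = Max ((\<lambda>z. z / real t) ` range (U t))"
      unfolding vmax_def mv_avg U_def by (simp add: image_image)
    also have "\<dots> = Max (range (U t)) / real t"
    proof (rule mono_Max_commute[symmetric])
      show "mono (\<lambda>z::real. z / real t)" by (rule monoI) (simp add: divide_right_mono)
    qed auto
    finally show ?thesis .
  qed
  have vmin_eq: "vmin (avg x t v* A) = Min (range (V t)) / real t" for t
  proof -
    have "vmin (avg x t v* A) = Min ((\<lambda>z. z / real t) ` range (V t))"
      unfolding vmin_def vm_avg V_def by (simp add: image_image)
    also have "\<dots> = Min (range (V t)) / real t"
    proof (rule mono_Min_commute[symmetric])
      show "mono (\<lambda>z::real. z / real t)" by (rule monoI) (simp add: divide_right_mono)
    qed auto
    finally show ?thesis .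
  qed
  have gapt: "vmax (A *v avg y t) - vmin (avg x t v* A) \<le> C * real t powr (\<beta> - 1)" if t1: "1 \<le> t" for t
  proof -
    have "vmax (A *v avg y t) - vmin (avg x t v* A) = gapf (UNIV::'m set) (UNIV::'n set) (U t) (V t) / real t"
      unfolding vmax_eq vmin_eq gapf_def by (simp add: diff_divide_distrib)
    also have "\<dots> \<le> C * real t powr \<beta> / real t"
      using C[OF t1] g0 t1 unfolding \<beta>_def by (simp add: divide_right_mono)
    also have "\<dots> = C * real t powr (\<beta> - 1)" using t1 by (simp add: powr_diff)
    finally show ?thesis .
  qed
  have xk: "x k = axis (ii (k-1)) 1" if "1 \<le> k" for k using xii[of "k-1"] that by simp
  have yk: "y k = axis (jj (k-1)) 1" if "1 \<le> k" for k using yjj[of "k-1"] that by simp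
  have axsum: "(\<Sum>i\<in>UNIV. axis j (1::real) $ i) = 1" for j :: "'a::finite"
    by (simp add: axis_def)
  have avg_simplex: "avg z t \<in> prob_simplex"
    if t1: "1 \<le> t" and zk: "\<And>k. 1 \<le> k \<Longrightarrow> \<exists>j. z k = axis j 1" for t and z :: "nat \<Rightarrow> real^'a::finite"
  proof -
    have nn: "0 \<le> z k $ i" if "k \<in> {1..t}" for k i
      using zk[of k] that by (auto simp: axis_def)
    have s1: "(\<Sum>i\<in>UNIV. z k $ i) = 1" if "k \<in> {1..t}" for k
      using zk[of k] that axsum by auto
    have "(\<Sum>i\<in>UNIV. avg z t $ i) = (\<Sum>i\<in>UNIV. \<Sum>k=1..t. z k $ i) / real t"
      unfolding avg_def by (simp add: sum_divide_distrib)
    also have "(\<Sum>i\<in>UNIV. \<Sum>k=1..t. z k $ i) = (\<Sum>k=1..t. \<Sum>i\<in>UNIV. z k $ i)"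
      by (rule sum.swap)
    also have "\<dots> = (\<Sum>k=1..t. 1)" using s1 by (intro sum.cong) auto
    finally have "(\<Sum>i\<in>UNIV. avg z t $ i) = 1" using t1 by simp
    moreover have "0 \<le> avg z t $ i" for i
    proof -
      have "0 \<le> (\<Sum>k=1..t. z k $ i)" using nn by (intro sum_nonneg) auto
      then show ?thesis unfolding avg_def by simp
    qed
    ultimately show ?thesis unfolding prob_simplex_def by auto
  qed
  have xs: "avg x t \<in> prob_simplex" if "1 \<le> t" for t
    using avg_simplex[OF that, of x] xk by blast
  have ys: "avg y t \<in> prob_simplex" if "1 \<le> t" for t
    using avg_simplex[OF that, of y] yk by blast
  define gv where "gv = game_value A"
  have bdd: "bdd_above ((\<lambda>z. vmin (z v* A)) ` prob_simplex)"
    using minmax_le[OF _ ys[of 1]] by (intro bdd_aboveI2) auto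
  have lower: "vmin (avg x t v* A) \<le> gv" if "1 \<le> t" for t
    unfolding gv_def game_value_def using xs[OF that] bdd by (rule cSUP_upper)
  have upper: "gv \<le> vmax (A *v avg y t)" if "1 \<le> t" for t
    unfolding gv_def game_value_def
    using xs[of 1] minmax_le[OF _ ys[OF that]] by (intro cSUP_least) auto
  have lim0: "(\<lambda>t. C * real t powr (\<beta> - 1)) \<longlonglongrightarrow> 0"
  proof -
    have "(\<lambda>t. real t powr (\<beta> - 1)) \<longlonglongrightarrow> 0"
      using b0 by (intro tendsto_neg_powr filterlim_real_sequentially) auto
    then have "(\<lambda>t. C * real t powr (\<beta> - 1)) \<longlonglongrightarrow> C * 0" by (intro tendsto_mult tendsto_const)
    then show ?thesis by simp
  qed
  have ev1: "eventually (\<lambda>t. 1 \<le> t) sequentially" by (rule eventually_ge_at_top)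
  have conv1: "(\<lambda>t. vmin (avg x t v* A)) \<longlonglongrightarrow> gv"
  proof (rule tendsto_sandwich[of "\<lambda>t. gv - C * real t powr (\<beta> - 1)" _ _ "\<lambda>t. gv"])
    show "eventually (\<lambda>t. gv - C * real t powr (\<beta> - 1) \<le> vmin (avg x t v* A)) sequentially"
      using ev1 by eventually_elim (use gapt upper in fastforce)
    show "eventually (\<lambda>t. vmin (avg x t v* A) \<le> gv) sequentially"
      using ev1 by eventually_elim (use lower in auto)
    show "(\<lambda>t. gv - C * real t powr (\<beta> - 1)) \<longlonglongrightarrow> gv"
      using tendsto_diff[OF tendsto_const lim0, of gv] by simp
  qed simp
  have conv2: "(\<lambda>t. vmax (A *v avg y t)) \<longlonglongrightarrow> gv"
  proof (rule tendsto_sandwich[of "\<lambda>t. gv" _ _ "\<lambda>t. gv + C * real t powr (\<beta> - 1)"])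
    show "eventually (\<lambda>t. vmax (A *v avg y t) \<le> gv + C * real t powr (\<beta> - 1)) sequentially"
      using ev1 by eventually_elim (use gapt lower in fastforce)
    show "eventually (\<lambda>t. gv \<le> vmax (A *v avg y t)) sequentially"
      using ev1 by eventually_elim (use upper in auto)
    show "(\<lambda>t. gv + C * real t powr (\<beta> - 1)) \<longlonglongrightarrow> gv"
      using tendsto_add[OF tendsto_const lim0, of gv] by simp
  qed simp
  have rate: "\<exists>C. \<forall>t\<ge>1. vmax (A *v avg y t) - vmin (avg x t v* A)
              \<le> C * real t powr (- 1 / (real CARD('m) + real CARD('n) - 2))"
  proof (cases "3 \<le> CARD('m) + CARD('n)")
    case True
    then have "real K = real CARD('m) + real CARD('n)" unfolding K_def by simp
    then have "\<beta> - 1 = - 1 / (real CARD('m) + real CARD('n) - 2)"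
      unfolding \<beta>_def using K3 by (simp add: field_simps)
    then show ?thesis using gapt by metis
  next
    case False
    have p: "0 < CARD('m)" "0 < CARD('n)" by simp_all
    have c2: "CARD('m) = 1" "CARD('n) = 1" using False p by linarith+
    have "K = 3" unfolding K_def using c2 by simp
    then have b: "\<beta> = 0" unfolding \<beta>_def by simp
    show ?thesis
    proof (rule exI[of _ C], intro allI impI)
      fix t :: nat assume t1: "1 \<le> t"
      have "real t powr (\<beta> - 1) \<le> real t powr 0"
        using t1 b by (intro powr_mono) auto
      then have "C * real t powr (\<beta> - 1) \<le> C * 1" using t1 C0 by (intro mult_left_mono) auto
      then show "vmax (A *v avg y t) - vmin (avg x t v* A)
              \<le> C * real t powr (- 1 / (real CARD('m) + real CARD('n) - 2))"
        using gapt[OF t1] c2 t1 by simp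
    qed
  qed
  show ?thesis using conv1 conv2 rate unfolding gv_def by blast
qed

end
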